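(* Let $X$ be a real Banach space. If $X$ is fully Mazur (respectively, fully Mackey complete), then every closed linear subspace of $X$ is fully Mazur (respectively, fully Mackey complete).
   Context: A linear subspace $Y\subset X^*$ is norming if $|||x|||=\sup\{x^*(x): x^*\in Y,\ \|x^*\|\le 1\}$ defines an equivalent norm on $X$. $X$ is fully Mazur if for every norming and norm-closed subspace $Y\subset X^*$, every $w^*$-sequentially continuous linear functional $Y\to\mathbb{R}$ is $w^*$-continuous. $X$ is fully Mackey complete if $(X,\mu(X,Y))$ is complete for every norming and norm-closed subspace $Y\subset X^*$, where $\mu(X,Y)$ is the locally convex topology on $X$ of uniform convergence on absolutely convex $w^*$-compact subsets of $Y$. *)

theory Defs
  imports "HOL-Analysis.Analysis"
begin

text \<open>Throughout, X is a real Banach space (type 'a::banach) and S \<subseteq> X a closed linear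
subspace, regarded as a Banach space in its own right.  Functionals on S are represented
as functions 'a \<Rightarrow> real vanishing outside S.  The type 'a \<Rightarrow> real carries the product
(pointwise) topology, so the subspace topology on a set of such functionals is the
weak-star topology (evaluation at points outside S is constantly 0).\<close>

definition dual_sp :: "'a::real_normed_vector set \<Rightarrow> ('a \<Rightarrow> real) set" where
  "dual_sp S = {f. (\<forall>x\<in>S. \<forall>y\<in>S. f (x + y) = f x + f y) \<and>
                   (\<forall>c. \<forall>x\<in>S. f (c *\<^sub>R x) = c * f x) \<and>
                   (\<exists>K. \<forall>x\<in>S. \<bar>f x\<bar> \<le> K * norm x) \<and>
                   (\<forall>x. x \<notin> S \<longrightarrow> f x = 0)}"

definition dnorm :: "'a::real_normed_vector set \<Rightarrow> ('a \<Rightarrow> real) \<Rightarrow> real" where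
  "dnorm S f = Sup {\<bar>f x\<bar> | x. x \<in> S \<and> norm x \<le> 1}"

definition dual_subspace :: "'a::real_normed_vector set \<Rightarrow> ('a \<Rightarrow> real) set \<Rightarrow> bool" where
  "dual_subspace S Y \<longleftrightarrow> Y \<subseteq> dual_sp S \<and> (\<lambda>x. 0) \<in> Y \<and>
     (\<forall>f\<in>Y. \<forall>g\<in>Y. (\<lambda>x. f x + g x) \<in> Y) \<and> (\<forall>c. \<forall>f\<in>Y. (\<lambda>x. c * f x) \<in> Y)"

definition norm_closed :: "'a::real_normed_vector set \<Rightarrow> ('a \<Rightarrow> real) set \<Rightarrow> bool" where
  "norm_closed S Y \<longleftrightarrow>
     (\<forall>g\<in>dual_sp S. (\<forall>e>0. \<exists>f\<in>Y. dnorm S (\<lambda>x. f x - g x) < e) \<longrightarrow> g \<in> Y)"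

definition Ynorm :: "'a::real_normed_vector set \<Rightarrow> ('a \<Rightarrow> real) set \<Rightarrow> 'a \<Rightarrow> real" where
  "Ynorm S Y x = Sup {f x | f. f \<in> Y \<and> dnorm S f \<le> 1}"

definition norming :: "'a::real_normed_vector set \<Rightarrow> ('a \<Rightarrow> real) set \<Rightarrow> bool" where
  "norming S Y \<longleftrightarrow> (\<exists>c>0. \<exists>C>0. \<forall>x\<in>S. c * norm x \<le> Ynorm S Y x \<and> Ynorm S Y x \<le> C * norm x)"

definition fully_Mazur :: "'a::real_normed_vector set \<Rightarrow> bool" where
  "fully_Mazur S \<longleftrightarrow>
     (\<forall>Y. dual_subspace S Y \<and> norming S Y \<and> norm_closed S Y \<longrightarrow>
        (\<forall>\<phi> :: ('a \<Rightarrow> real) \<Rightarrow> real.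
            (\<forall>f\<in>Y. \<forall>g\<in>Y. \<phi> (\<lambda>x. f x + g x) = \<phi> f + \<phi> g) \<and>
            (\<forall>c. \<forall>f\<in>Y. \<phi> (\<lambda>x. c * f x) = c * \<phi> f) \<and>
            (\<forall>F f. (\<forall>n. F n \<in> Y) \<and> f \<in> Y \<and> F \<longlonglongrightarrow> f \<longrightarrow> (\<lambda>n. \<phi> (F n)) \<longlonglongrightarrow> \<phi> f)
            \<longrightarrow> continuous_on Y \<phi>))"

text \<open>Absolutely convex weak-star compact subsets of Y (these define the Mackey topology).\<close>
definition mackey_sets :: "('a \<Rightarrow> real) set \<Rightarrow> ('a \<Rightarrow> real) set set" where
  "mackey_sets Y = {K. K \<subseteq> Y \<and> compact K \<and>
      (\<forall>f\<in>K. \<forall>g\<in>K. \<forall>a b. \<bar>a\<bar> + \<bar>b\<bar> \<le> 1 \<longrightarrow> (\<lambda>x. a * f x + b * g x) \<in> K)}"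

text \<open>Completeness of (S, mu(S,Y)): every Cauchy filter on S converges (uniform structure of
uniform convergence on the sets in mackey_sets Y).\<close>
definition mackey_complete :: "'a::real_normed_vector set \<Rightarrow> ('a \<Rightarrow> real) set \<Rightarrow> bool" where
  "mackey_complete S Y \<longleftrightarrow>
     (\<forall>F :: 'a filter. F \<noteq> bot \<and> eventually (\<lambda>x. x \<in> S) F \<and>
        (\<forall>K\<in>mackey_sets Y. \<forall>e>0.
            eventually (\<lambda>(x, y). \<forall>f\<in>K. \<bar>f x - f y\<bar> \<le> e) (F \<times>\<^sub>F F))
        \<longrightarrow> (\<exists>z\<in>S. \<forall>K\<in>mackey_sets Y. \<forall>e>0.
                 eventually (\<lambda>x. \<forall>f\<in>K. \<bar>f x - f z\<bar> \<le> e) F))"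

definition fully_Mackey_complete :: "'a::real_normed_vector set \<Rightarrow> bool" where
  "fully_Mackey_complete S \<longleftrightarrow>
     (\<forall>Y. dual_subspace S Y \<and> norming S Y \<and> norm_closed S Y \<longrightarrow> mackey_complete S Y)"

end

theory Submission
  imports Defs
begin

lemma subspace_chain_Union:
  fixes C :: "('a::real_vector) set set"
  assumes ch: "\<forall>A\<in>C. \<forall>B\<in>C. A \<subseteq> B \<or> B \<subseteq> A" and ne: "C \<noteq> {}" and sub: "\<And>G. G \<in> C \<Longrightarrow> subspace G"
  shows "subspace (\<Union>C)"
  unfolding subspace_def
proof (intro conjI ballI allI)
  obtain G where "G \<in> C" using ne by blast
  then show "0 \<in> \<Union>C" using sub[of G] by (auto simp: subspace_def)
next
  fix x y assume "x \<in> \<Union>C" "y \<in> \<Union>C"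
  then obtain G1 G2 where g: "G1 \<in> C" "G2 \<in> C" "x \<in> G1" "y \<in> G2" by blast
  from ch g(1,2) have "G1 \<subseteq> G2 \<or> G2 \<subseteq> G1" by blast
  then show "x + y \<in> \<Union>C"
  proof
    assume "G1 \<subseteq> G2" then show ?thesis using g sub[of G2] by (auto simp: subspace_def)
  next
    assume "G2 \<subseteq> G1" then show ?thesis using g sub[of G1] by (auto simp: subspace_def)
  qed
next
  fix c x assume "x \<in> \<Union>C"
  then obtain G where "G \<in> C" "x \<in> G" by blast
  then have "c *\<^sub>R x \<in> G" using sub[of G] by (auto simp: subspace_def)
  then show "c *\<^sub>R x \<in> \<Union>C" using \<open>G \<in> C\<close> by blast
qed

lemma one_step_ext:
  fixes G :: "('a::real_normed_vector \<times> real) set"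
  assumes sG: "subspace G" and B: "B \<ge> 0" and bd: "\<forall>(x,y)\<in>G. \<bar>y\<bar> \<le> B * norm x"
    and x0: "x0 \<notin> fst ` G"
  shows "\<exists>G'. subspace G' \<and> (\<forall>(x,y)\<in>G'. \<bar>y\<bar> \<le> B * norm x) \<and> G \<subseteq> G' \<and> G' \<noteq> G"
proof -
  have addG: "(x + x', y + y') \<in> G" if "(x,y) \<in> G" "(x',y') \<in> G" for x y x' y'
    using sG that subspace_add[of G "(x,y)" "(x',y')"] by simp
  have scG: "(c *\<^sub>R x, c * y) \<in> G" if "(x,y) \<in> G" for c x y
    using sG that subspace_scale[of G "(x,y)" c] by simp
  have zG: "(0,0) \<in> G" using sG subspace_0 by (metis zero_prod_def)
  define L where "L = {y - B * norm (x - x0) | x y. (x,y) \<in> G}"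
  have key: "y - B * norm (x - x0) \<le> B * norm (x' + x0) - y'" if "(x,y) \<in> G" "(x',y') \<in> G" for x y x' y'
  proof -
    have "y + y' \<le> B * norm (x + x')" using bd addG[OF that] by auto
    also have "norm (x + x') \<le> norm (x - x0) + norm (x' + x0)"
      using norm_triangle_ineq[of "x - x0" "x' + x0"] by simp
    then have "B * norm (x + x') \<le> B * norm (x - x0) + B * norm (x' + x0)"
      using B by (metis distrib_left mult_left_mono)
    finally show ?thesis by simp
  qed
  have Lne: "L \<noteq> {}" using zG unfolding L_def by blast
  have Lbdd: "bdd_above L" unfolding L_def bdd_above_def
    using key[OF _ zG] by auto
  define \<alpha> where "\<alpha> = Sup L"
  have alo: "y - B * norm (x - x0) \<le> \<alpha>" if "(x,y) \<in> G" for x y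
    unfolding \<alpha>_def using that Lbdd by (intro cSup_upper) (auto simp: L_def)
  have ahi: "\<alpha> \<le> B * norm (x' + x0) - y'" if "(x',y') \<in> G" for x' y'
    unfolding \<alpha>_def using Lne key[OF _ that] by (intro cSup_least) (auto simp: L_def)
  have one: "y + t * \<alpha> \<le> B * norm (x + t *\<^sub>R x0)" if xy: "(x,y) \<in> G" for x y t
  proof (cases "t = 0")
    case True then show ?thesis using bd xy by auto
  next
    case False
    show ?thesis
    proof (cases "t > 0")
      case True
      have "\<alpha> \<le> B * norm ((1/t) *\<^sub>R x + x0) - (1/t) * y" using ahi[OF scG[OF xy]] .
      then have "t * (\<alpha> + (1/t) * y) \<le> t * (B * norm ((1/t) *\<^sub>R x + x0))"
        using True by (intro mult_left_mono) auto
      then have "t * \<alpha> \<le> t * (B * norm ((1/t) *\<^sub>R x + x0)) - y"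
        using True by (simp add: algebra_simps)
      moreover have "t * norm ((1/t) *\<^sub>R x + x0) = norm (x + t *\<^sub>R x0)"
      proof -
        have "t * norm ((1/t) *\<^sub>R x + x0) = norm (t *\<^sub>R ((1/t) *\<^sub>R x + x0))" using True by simp
        also have "t *\<^sub>R ((1/t) *\<^sub>R x + x0) = x + t *\<^sub>R x0" using True by (simp add: algebra_simps)
        finally show ?thesis .
      qed
      ultimately show ?thesis by (simp add: algebra_simps)
    next
      case False
      with \<open>t \<noteq> 0\<close> have s: "-t > 0" by simp
      have "(1/(-t)) * y - B * norm ((1/(-t)) *\<^sub>R x - x0) \<le> \<alpha>" using alo[OF scG[OF xy]] .
      then have "(-t) * ((1/(-t)) * y - B * norm ((1/(-t)) *\<^sub>R x - x0)) \<le> (-t) * \<alpha>"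
        using s by (intro mult_left_mono) auto
      then have "y - (-t) * (B * norm ((1/(-t)) *\<^sub>R x - x0)) \<le> (-t) * \<alpha>"
        using s by (simp add: algebra_simps)
      moreover have "(-t) * norm ((1/(-t)) *\<^sub>R x - x0) = norm (x + t *\<^sub>R x0)"
      proof -
        have "(-t) * norm ((1/(-t)) *\<^sub>R x - x0) = norm ((-t) *\<^sub>R ((1/(-t)) *\<^sub>R x - x0))" using s by simp
        also have "(-t) *\<^sub>R ((1/(-t)) *\<^sub>R x - x0) = x + t *\<^sub>R x0" using s by (simp add: algebra_simps)
        finally show ?thesis .
      qed
      then have "(-t) * (B * norm ((1/(-t)) *\<^sub>R x - x0)) = B * norm (x + t *\<^sub>R x0)"
        by (metis mult.left_commute)
      ultimately show ?thesis by linarith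
    qed
  qed
  define G' where "G' = {(x + t *\<^sub>R x0, y + t * \<alpha>) | x y t. (x,y) \<in> G}"
  have memG': "(x + t *\<^sub>R x0, y + t * \<alpha>) \<in> G'" if "(x,y) \<in> G" for x y t
    unfolding G'_def using that by blast
  have "subspace G'" unfolding subspace_def
  proof (intro conjI ballI allI)
    show "0 \<in> G'" unfolding G'_def using zG by (auto simp: zero_prod_def intro!: exI[of _ 0])
  next
    fix p q assume "p \<in> G'" "q \<in> G'"
    then obtain x y t x' y' t' where "p = (x + t *\<^sub>R x0, y + t * \<alpha>)" "(x,y) \<in> G"
      "q = (x' + t' *\<^sub>R x0, y' + t' * \<alpha>)" "(x',y') \<in> G" unfolding G'_def by blast
    then have "p + q = ((x + x') + (t + t') *\<^sub>R x0, (y + y') + (t + t') * \<alpha>)"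
      by (simp add: algebra_simps)
    then show "p + q \<in> G'" using memG'[OF addG[OF \<open>(x,y) \<in> G\<close> \<open>(x',y') \<in> G\<close>]] by simp
  next
    fix c p assume "p \<in> G'"
    then obtain x y t where "p = (x + t *\<^sub>R x0, y + t * \<alpha>)" "(x,y) \<in> G" unfolding G'_def by blast
    then have "c *\<^sub>R p = (c *\<^sub>R x + (c * t) *\<^sub>R x0, c * y + (c * t) * \<alpha>)"
      by (simp add: algebra_simps)
    then show "c *\<^sub>R p \<in> G'" using memG'[OF scG[OF \<open>(x,y) \<in> G\<close>]] by simp
  qed
  moreover have "\<forall>(x,y)\<in>G'. \<bar>y\<bar> \<le> B * norm x"
  proof (clarsimp simp: G'_def)
    fix x y t assume xy: "(x,y) \<in> G"
    have mxy: "(-x, -y) \<in> G" using scG[OF xy, of "-1"] by simp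
    have "y + t * \<alpha> \<le> B * norm (x + t *\<^sub>R x0)" using one[OF xy] .
    moreover have "(-y) + (-t) * \<alpha> \<le> B * norm ((-x) + (-t) *\<^sub>R x0)" using one[OF mxy, of "-t"] by simp
    moreover have "norm ((-x) + (-t) *\<^sub>R x0) = norm (x + t *\<^sub>R x0)"
      by (metis minus_add_distrib norm_minus_cancel scaleR_minus_left)
    ultimately show "\<bar>y + t * \<alpha>\<bar> \<le> B * norm (x + t *\<^sub>R x0)" by (smt (verit) mult_minus_left)
  qed
  moreover have "G \<subseteq> G'" using memG'[of _ _ 0] by auto
  moreover have "(x0, \<alpha>) \<in> G'" using memG'[OF zG, of 1] by simp
  then have "G' \<noteq> G" using x0 by (metis fst_conv image_eqI)
  ultimately show ?thesis by blast
qed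

lemma HB_graph:
  fixes G0 :: "('a::real_normed_vector \<times> real) set"
  assumes s0: "subspace G0" and B: "B \<ge> 0" and bd0: "\<forall>(x,y)\<in>G0. \<bar>y\<bar> \<le> B * norm x"
  shows "\<exists>g. (\<forall>x y. g (x + y) = g x + g y) \<and> (\<forall>c x. g (c *\<^sub>R x) = c * g x) \<and>
             (\<forall>x. \<bar>g x\<bar> \<le> B * norm x) \<and> (\<forall>(x,y)\<in>G0. g x = y)"
proof -
  define P where "P = {G. subspace G \<and> (\<forall>(x,y)\<in>G. \<bar>y\<bar> \<le> B * norm x) \<and> G0 \<subseteq> G}"
  have "\<forall>C\<in>chains P. \<exists>U\<in>P. \<forall>X\<in>C. X \<subseteq> U"
  proof
    fix C assume C: "C \<in> chains P"
    show "\<exists>U\<in>P. \<forall>X\<in>C. X \<subseteq> U"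
    proof (cases "C = {}")
      case True
      then show ?thesis using s0 bd0 by (auto simp: P_def)
    next
      case False
      have CP: "C \<subseteq> P" and ch: "\<forall>A\<in>C. \<forall>B\<in>C. A \<subseteq> B \<or> B \<subseteq> A"
        using C by (auto simp: chains_def chain_subset_def)
      have "\<Union>C \<in> P" unfolding P_def
      proof (intro CollectI conjI)
        show "subspace (\<Union>C)" using subspace_chain_Union[OF ch False] CP by (auto simp: P_def)
        show "\<forall>(x,y)\<in>\<Union>C. \<bar>y\<bar> \<le> B * norm x" using CP by (auto simp: P_def)
        show "G0 \<subseteq> \<Union>C" using CP False by (auto simp: P_def)
      qed
      then show ?thesis by blast
    qed
  qed
  from Zorn_Lemma2[OF this] obtain G where GP: "G \<in> P" and max: "\<forall>X\<in>P. G \<subseteq> X \<longrightarrow> X = G" by blast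
  have sG: "subspace G" and bd: "\<forall>(x,y)\<in>G. \<bar>y\<bar> \<le> B * norm x" and G0G: "G0 \<subseteq> G"
    using GP by (auto simp: P_def)
  have full: "fst ` G = UNIV"
  proof (rule ccontr)
    assume "fst ` G \<noteq> UNIV"
    then obtain x0 where "x0 \<notin> fst ` G" by blast
    from one_step_ext[OF sG B bd this] obtain G' where
      "subspace G'" "\<forall>(x,y)\<in>G'. \<bar>y\<bar> \<le> B * norm x" "G \<subseteq> G'" "G' \<noteq> G" by blast
    moreover then have "G' \<in> P" using G0G by (auto simp: P_def)
    ultimately show False using max by blast
  qed
  have addG: "(x + x', y + y') \<in> G" if "(x,y) \<in> G" "(x',y') \<in> G" for x y x' y'
    using sG that subspace_add[of G "(x,y)" "(x',y')"] by simp
  have scG: "(c *\<^sub>R x, c * y) \<in> G" if "(x,y) \<in> G" for c x y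
    using sG that subspace_scale[of G "(x,y)" c] by simp
  have uniq: "y = z" if "(x,y) \<in> G" "(x,z) \<in> G" for x y z
  proof -
    have "(x + (-1) *\<^sub>R x, y + (-1) * z) \<in> G" using addG[OF that(1) scG[OF that(2)]] .
    then have "\<bar>y - z\<bar> \<le> 0" using bd by auto
    then show ?thesis by simp
  qed
  define g where "g x = (THE y. (x,y) \<in> G)" for x
  have gG: "(x, g x) \<in> G" for x
  proof -
    obtain y where "(x,y) \<in> G" using full by (metis UNIV_I fst_eqD imageE surj_pair)
    then have "(THE y. (x,y) \<in> G) = y" using uniq by blast
    then show ?thesis using \<open>(x,y) \<in> G\<close> by (simp add: g_def)
  qed
  have gval: "g x = y" if "(x,y) \<in> G" for x y using uniq[OF that gG[of x]] by simp
  show ?thesis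
  proof (intro exI conjI allI)
    show "g (x + y) = g x + g y" for x y using gval[OF addG[OF gG[of x] gG[of y]]] .
    show "g (c *\<^sub>R x) = c * g x" for c x using gval[OF scG[OF gG[of x]]] .
    show "\<bar>g x\<bar> \<le> B * norm x" for x using bd gG[of x] by auto
    show "\<forall>(x,y)\<in>G0. g x = y" using G0G gval by auto
  qed
qed


definition restr :: "'a set \<Rightarrow> ('a \<Rightarrow> real) \<Rightarrow> ('a \<Rightarrow> real)" where
  "restr S g = (\<lambda>x. if x \<in> S then g x else 0)"

lemma dual_sp_D:
  assumes "f \<in> dual_sp S"
  shows "\<And>x y. x \<in> S \<Longrightarrow> y \<in> S \<Longrightarrow> f (x + y) = f x + f y"
    and "\<And>c x. x \<in> S \<Longrightarrow> f (c *\<^sub>R x) = c * f x"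
    and "\<exists>K. \<forall>x\<in>S. \<bar>f x\<bar> \<le> K * norm x"
    and "\<And>x. x \<notin> S \<Longrightarrow> f x = 0"
  using assms by (auto simp: dual_sp_def)

lemma dual_sp_0: "f \<in> dual_sp S \<Longrightarrow> subspace S \<Longrightarrow> f 0 = 0"
  using dual_sp_D(2)[of f S 0 0] by (simp add: subspace_0)

lemma dnorm_bdd:
  assumes "f \<in> dual_sp S"
  shows "bdd_above {\<bar>f x\<bar> | x. x \<in> S \<and> norm x \<le> 1}"
proof -
  obtain K where K: "\<forall>x\<in>S. \<bar>f x\<bar> \<le> K * norm x" using dual_sp_D(3)[OF assms] by blast
  have "\<bar>f x\<bar> \<le> \<bar>K\<bar>" if "x \<in> S" "norm x \<le> 1" for x
  proof -
    have "\<bar>f x\<bar> \<le> K * norm x" using K that by auto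
    also have "\<dots> \<le> \<bar>K\<bar> * norm x" by (simp add: mult_right_mono)
    also have "\<dots> \<le> \<bar>K\<bar>" using that by (simp add: mult_left_le)
    finally show ?thesis .
  qed
  then show ?thesis unfolding bdd_above_def by blast
qed

lemma dnorm_nonneg:
  assumes "f \<in> dual_sp S" "subspace S"
  shows "0 \<le> dnorm S f"
proof -
  have "\<bar>f 0\<bar> \<le> dnorm S f" unfolding dnorm_def
    using assms subspace_0[OF assms(2)] by (intro cSup_upper dnorm_bdd) auto
  then show ?thesis using dual_sp_0[OF assms] by simp
qed

lemma dnorm_bound:
  assumes f: "f \<in> dual_sp S" and S: "subspace S" and x: "x \<in> S"
  shows "\<bar>f x\<bar> \<le> dnorm S f * norm x"
proof (cases "x = 0")
  case True then show ?thesis using dual_sp_0[OF f S] by simp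
next
  case False
  define u where "u = (1 / norm x) *\<^sub>R x"
  have uS: "u \<in> S" using S x by (simp add: u_def subspace_scale)
  have nu: "norm u = 1" using False by (simp add: u_def)
  have "\<bar>f u\<bar> \<le> dnorm S f" unfolding dnorm_def
    using uS nu by (intro cSup_upper dnorm_bdd[OF f]) auto
  moreover have "f u = (1 / norm x) * f x" using dual_sp_D(2)[OF f x] by (simp add: u_def)
  ultimately have "\<bar>f x\<bar> / norm x \<le> dnorm S f" by simp
  then show ?thesis using False by (simp add: divide_le_eq mult.commute)
qed

lemma dnorm_le:
  assumes S: "subspace S" and M: "M \<ge> 0" and b: "\<forall>x\<in>S. \<bar>f x\<bar> \<le> M * norm x"
  shows "dnorm S f \<le> M"
  unfolding dnorm_def
proof (rule cSup_least)
  show "{\<bar>f x\<bar> |x. x \<in> S \<and> norm x \<le> 1} \<noteq> {}" using subspace_0[OF S] by auto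
next
  fix v assume "v \<in> {\<bar>f x\<bar> |x. x \<in> S \<and> norm x \<le> 1}"
  then obtain x where "x \<in> S" "norm x \<le> 1" "v = \<bar>f x\<bar>" by blast
  then have "v \<le> M * norm x" using b by auto
  also have "\<dots> \<le> M" using M \<open>norm x \<le> 1\<close> by (simp add: mult_left_le)
  finally show "v \<le> M" .
qed

lemma dual_sp_UNIV_I:
  assumes "\<forall>x y. g (x + y) = g x + g y" "\<forall>c x. g (c *\<^sub>R x) = c * g x" "\<forall>x. \<bar>g x\<bar> \<le> B * norm x"
  shows "g \<in> dual_sp UNIV"
  using assms unfolding dual_sp_def by blast

lemma ext_dual:
  fixes S :: "'a::real_normed_vector set"
  assumes S: "subspace S" and f: "f \<in> dual_sp S" and B: "dnorm S f \<le> B"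
  shows "\<exists>g\<in>dual_sp UNIV. (\<forall>x\<in>S. g x = f x) \<and> dnorm UNIV g \<le> B \<and> restr S g = f"
proof -
  define G0 where "G0 = {(x, f x) | x. x \<in> S}"
  have B0: "B \<ge> 0" using dnorm_nonneg[OF f S] B by linarith
  have sG0: "subspace G0" unfolding subspace_def G0_def
  proof (intro conjI ballI allI)
    show "0 \<in> {(x, f x) |x. x \<in> S}" using subspace_0[OF S] dual_sp_0[OF f S]
      by (auto simp: zero_prod_def)
  next
    fix p q assume "p \<in> {(x, f x) |x. x \<in> S}" "q \<in> {(x, f x) |x. x \<in> S}"
    then obtain x y where "p = (x, f x)" "q = (y, f y)" "x \<in> S" "y \<in> S" by blast
    then show "p + q \<in> {(x, f x) |x. x \<in> S}"
      using dual_sp_D(1)[OF f] subspace_add[OF S] by auto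
  next
    fix c p assume "p \<in> {(x, f x) |x. x \<in> S}"
    then obtain x where "p = (x, f x)" "x \<in> S" by blast
    then show "c *\<^sub>R p \<in> {(x, f x) |x. x \<in> S}"
      using dual_sp_D(2)[OF f] subspace_scale[OF S] by auto
  qed
  have bd: "\<forall>(x,y)\<in>G0. \<bar>y\<bar> \<le> B * norm x"
  proof (clarsimp simp: G0_def)
    fix x assume "x \<in> S"
    have "\<bar>f x\<bar> \<le> dnorm S f * norm x" using dnorm_bound[OF f S \<open>x \<in> S\<close>] .
    also have "\<dots> \<le> B * norm x" using B by (simp add: mult_right_mono)
    finally show "\<bar>f x\<bar> \<le> B * norm x" .
  qed
  obtain g where g1: "\<forall>x y. g (x + y) = g x + g y" and g2: "\<forall>c x. g (c *\<^sub>R x) = c * g x"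
    and g3: "\<forall>x. \<bar>g x\<bar> \<le> B * norm x" and g4: "\<forall>(x,y)\<in>G0. g x = y"
    using HB_graph[OF sG0 B0 bd] by blast
  have gS: "\<forall>x\<in>S. g x = f x" using g4 by (auto simp: G0_def)
  show ?thesis
  proof (intro bexI conjI)
    show "g \<in> dual_sp UNIV" using dual_sp_UNIV_I[OF g1 g2 g3] .
    show "\<forall>x\<in>S. g x = f x" using gS .
    show "dnorm UNIV g \<le> B" using dnorm_le[of UNIV B g] g3 B0 by simp
    show "restr S g = f" using gS dual_sp_D(4)[OF f] by (auto simp: restr_def)
  qed
qed

lemma sep_functional:
  fixes S :: "'a::real_normed_vector set"
  assumes S: "subspace S" and cS: "closed S" and x0: "x0 \<notin> S"
  shows "\<exists>g\<in>dual_sp UNIV. (\<forall>x\<in>S. g x = 0) \<and> g x0 = infdist x0 S \<and> infdist x0 S > 0 \<and> dnorm UNIV g \<le> 1"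
proof -
  define d where "d = infdist x0 S"
  have Sne: "S \<noteq> {}" using subspace_0[OF S] by auto
  have dpos: "d > 0" unfolding d_def using infdist_pos_not_in_closed[OF cS Sne x0] .
  define G0 where "G0 = {(s + t *\<^sub>R x0, t * d) | s t. s \<in> S}"
  have memG0: "(s + t *\<^sub>R x0, t * d) \<in> G0" if "s \<in> S" for s t using that unfolding G0_def by blast
  have sG0: "subspace G0" unfolding subspace_def
  proof (intro conjI ballI allI)
    show "0 \<in> G0" using memG0[OF subspace_0[OF S], of 0] by (simp add: zero_prod_def)
  next
    fix p q assume "p \<in> G0" "q \<in> G0"
    then obtain s t s' t' where "p = (s + t *\<^sub>R x0, t * d)" "q = (s' + t' *\<^sub>R x0, t' * d)" "s \<in> S" "s' \<in> S"
      unfolding G0_def by blast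
    then have e: "p + q = ((s + s') + (t + t') *\<^sub>R x0, (t + t') * d)" by (simp add: algebra_simps)
    have "((s + s') + (t + t') *\<^sub>R x0, (t + t') * d) \<in> G0"
      using memG0 subspace_add[OF S \<open>s \<in> S\<close> \<open>s' \<in> S\<close>] by blast
    then show "p + q \<in> G0" by (subst e)
  next
    fix c p assume "p \<in> G0"
    then obtain s t where "p = (s + t *\<^sub>R x0, t * d)" "s \<in> S" unfolding G0_def by blast
    then have e: "c *\<^sub>R p = (c *\<^sub>R s + (c * t) *\<^sub>R x0, (c * t) * d)" by (simp add: algebra_simps)
    have "(c *\<^sub>R s + (c * t) *\<^sub>R x0, (c * t) * d) \<in> G0"
      using memG0 subspace_scale[OF S \<open>s \<in> S\<close>] by blast
    then show "c *\<^sub>R p \<in> G0" by (subst e)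
  qed
  have bd: "\<forall>(x,y)\<in>G0. \<bar>y\<bar> \<le> 1 * norm x"
  proof (clarsimp simp: G0_def)
    fix s t assume sS: "s \<in> S"
    show "\<bar>t * d\<bar> \<le> norm (s + t *\<^sub>R x0)"
    proof (cases "t = 0")
      case True then show ?thesis by simp
    next
      case False
      have mS: "- (1/t) *\<^sub>R s \<in> S" using sS S by (simp add: subspace_neg subspace_scale)
      have "d \<le> dist x0 (- (1/t) *\<^sub>R s)" unfolding d_def using infdist_le[OF mS] .
      also have "dist x0 (- (1/t) *\<^sub>R s) = norm ((1/t) *\<^sub>R (s + t *\<^sub>R x0))"
        using False by (simp add: dist_norm algebra_simps)
      also have "\<dots> = norm (s + t *\<^sub>R x0) / \<bar>t\<bar>" by simp
      finally have "d * \<bar>t\<bar> \<le> norm (s + t *\<^sub>R x0)" using False by (simp add: le_divide_eq)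
      then show ?thesis using dpos by (simp add: abs_mult mult.commute)
    qed
  qed
  obtain g where g1: "\<forall>x y. g (x + y) = g x + g y" and g2: "\<forall>c x. g (c *\<^sub>R x) = c * g x"
    and g3: "\<forall>x. \<bar>g x\<bar> \<le> 1 * norm x" and g4: "\<forall>(x,y)\<in>G0. g x = y"
    using HB_graph[OF sG0 _ bd] by auto
  show ?thesis
  proof (intro bexI conjI)
    show "g \<in> dual_sp UNIV" using dual_sp_UNIV_I[OF g1 g2 g3] .
    show "\<forall>x\<in>S. g x = 0"
    proof
      fix x assume "x \<in> S"
      then have "(x, 0) \<in> G0" using memG0[of x 0] by simp
      then show "g x = 0" using g4 by (metis (mono_tags, lifting) case_prodD)
    qed
    show "g x0 = infdist x0 S" using g4 memG0[OF subspace_0[OF S], of 1] by (auto simp: d_def)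
    show "infdist x0 S > 0" using dpos d_def by simp
    show "dnorm UNIV g \<le> 1" using dnorm_le[of UNIV 1 g] g3 by simp
  qed
qed


lemma fin_repr:
  fixes Z :: "('a::real_vector \<Rightarrow> real) set"
  assumes Zadd: "\<forall>f\<in>Z. \<forall>g\<in>Z. (\<lambda>x. f x + g x) \<in> Z" and Zsc: "\<forall>c. \<forall>f\<in>Z. (\<lambda>x. c * f x) \<in> Z"
    and Zlin: "\<forall>f\<in>Z. (\<forall>x y. f (x + y) = f x + f y) \<and> (\<forall>c x. f (c *\<^sub>R x) = c * f x)"
    and fin: "finite P"
  shows "\<forall>\<psi>. (\<forall>f\<in>Z. \<forall>g\<in>Z. \<psi> (\<lambda>x. f x + g x) = \<psi> f + \<psi> g) \<and> (\<forall>c. \<forall>f\<in>Z. \<psi> (\<lambda>x. c * f x) = c * \<psi> f)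
     \<and> (\<forall>g\<in>Z. (\<forall>p\<in>P. g p = 0) \<longrightarrow> \<psi> g = 0) \<longrightarrow> (\<exists>x0. \<forall>g\<in>Z. \<psi> g = g x0)"
  using fin
proof (induction P rule: finite_induct)
  case empty
  show ?case
  proof (intro allI impI)
    fix \<psi> :: "('a \<Rightarrow> real) \<Rightarrow> real"
    assume "(\<forall>f\<in>Z. \<forall>g\<in>Z. \<psi> (\<lambda>x. f x + g x) = \<psi> f + \<psi> g) \<and> (\<forall>c. \<forall>f\<in>Z. \<psi> (\<lambda>x. c * f x) = c * \<psi> f)
     \<and> (\<forall>g\<in>Z. (\<forall>p\<in>{}. g p = 0) \<longrightarrow> \<psi> g = 0)"
    then have "\<forall>g\<in>Z. \<psi> g = 0" by auto
    moreover have "\<forall>g\<in>Z. g 0 = 0" using Zlin by (metis mult_zero_left scale_zero_left)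
    ultimately show "\<exists>x0. \<forall>g\<in>Z. \<psi> g = g x0" by (intro exI[of _ 0]) auto
  qed
next
  case (insert q P)
  show ?case
  proof (intro allI impI)
    fix \<psi> :: "('a \<Rightarrow> real) \<Rightarrow> real"
    assume H: "(\<forall>f\<in>Z. \<forall>g\<in>Z. \<psi> (\<lambda>x. f x + g x) = \<psi> f + \<psi> g) \<and> (\<forall>c. \<forall>f\<in>Z. \<psi> (\<lambda>x. c * f x) = c * \<psi> f)
     \<and> (\<forall>g\<in>Z. (\<forall>p\<in>insert q P. g p = 0) \<longrightarrow> \<psi> g = 0)"
    have padd: "\<psi> (\<lambda>x. f x + g x) = \<psi> f + \<psi> g" if "f \<in> Z" "g \<in> Z" for f g
      using H[THEN conjunct1, rule_format, OF that] .
    have psc: "\<psi> (\<lambda>x. c * f x) = c * \<psi> f" if "f \<in> Z" for c f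
      using H[THEN conjunct2, THEN conjunct1, rule_format, OF that] .
    have pker: "\<psi> g = 0" if "g \<in> Z" "\<forall>p\<in>insert q P. g p = 0" for g
      using H[THEN conjunct2, THEN conjunct2] that by blast
    show "\<exists>x0. \<forall>g\<in>Z. \<psi> g = g x0"
    proof (cases "\<forall>g\<in>Z. (\<forall>p\<in>P. g p = 0) \<longrightarrow> g q = 0")
      case True
      then have "\<forall>g\<in>Z. (\<forall>p\<in>P. g p = 0) \<longrightarrow> \<psi> g = 0" using pker by auto
      then show ?thesis using insert.IH[rule_format, OF conjI[OF H[THEN conjunct1] conjI[OF H[THEN conjunct2, THEN conjunct1]]]] by blast
    next
      case False
      then obtain g1 where g1: "g1 \<in> Z" "\<forall>p\<in>P. g1 p = 0" "g1 q \<noteq> 0" by blast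
      define g0 where "g0 = (\<lambda>x. (1 / g1 q) * g1 x)"
      have g0Z: "g0 \<in> Z" using Zsc g1(1) unfolding g0_def by blast
      have g0q: "g0 q = 1" using g1 by (simp add: g0_def)
      have g0P: "\<forall>p\<in>P. g0 p = 0" using g1 by (simp add: g0_def)
      define h where "h g = (\<lambda>x. g x + (- g q) * g0 x)" for g :: "'a \<Rightarrow> real"
      have hZ: "h g \<in> Z" if "g \<in> Z" for g
      proof -
        have "(\<lambda>x. (- g q) * g0 x) \<in> Z" using Zsc[rule_format, OF g0Z] .
        from Zadd[rule_format, OF that this] show ?thesis unfolding h_def by simp
      qed
      define \<psi>' where "\<psi>' g = \<psi> (h g)" for g
      have "\<exists>x1. \<forall>g\<in>Z. \<psi>' g = g x1"
      proof (rule insert.IH[rule_format], intro conjI ballI allI impI)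
        fix f g assume fg: "f \<in> Z" "g \<in> Z"
        have "h (\<lambda>x. f x + g x) = (\<lambda>x. h f x + h g x)" by (simp add: h_def fun_eq_iff algebra_simps)
        then show "\<psi>' (\<lambda>x. f x + g x) = \<psi>' f + \<psi>' g" using padd[OF hZ[OF fg(1)] hZ[OF fg(2)]]
          by (simp add: \<psi>'_def)
      next
        fix c f assume f: "f \<in> Z"
        have "h (\<lambda>x. c * f x) = (\<lambda>x. c * h f x)" by (simp add: h_def fun_eq_iff algebra_simps)
        then show "\<psi>' (\<lambda>x. c * f x) = c * \<psi>' f" using psc[OF hZ[OF f]] by (simp add: \<psi>'_def)
      next
        fix g assume g: "g \<in> Z" "\<forall>p\<in>P. g p = 0"
        have "\<forall>p\<in>insert q P. h g p = 0" using g g0P g0q by (simp add: h_def)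
        then show "\<psi>' g = 0" using pker[OF hZ[OF g(1)]] by (simp add: \<psi>'_def)
      qed
      then obtain x1 where x1: "\<forall>g\<in>Z. \<psi>' g = g x1" by blast
      show ?thesis
      proof (intro exI ballI)
        fix g assume g: "g \<in> Z"
        have e: "(\<lambda>x. h g x + g q * g0 x) = g" by (simp add: h_def fun_eq_iff)
        have "(\<lambda>x. g q * g0 x) \<in> Z" using Zsc[rule_format, OF g0Z] .
        from padd[OF hZ[OF g] this] have "\<psi> (\<lambda>x. h g x + g q * g0 x) = \<psi> (h g) + \<psi> (\<lambda>x. g q * g0 x)" .
        then have "\<psi> g = \<psi> (h g) + \<psi> (\<lambda>x. g q * g0 x)" by (simp only: e)
        also have "\<dots> = g x1 + g q * \<psi> g0" using x1 g psc[OF g0Z] by (simp add: \<psi>'_def)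
        also have "\<dots> = g (x1 + \<psi> g0 *\<^sub>R q)" using Zlin g by (simp add: mult.commute)
        finally show "\<psi> g = g (x1 + \<psi> g0 *\<^sub>R q)" .
      qed
    qed
  qed
qed

lemma cont_repr:
  fixes Z :: "('a::real_vector \<Rightarrow> real) set"
  assumes Zadd: "\<forall>f\<in>Z. \<forall>g\<in>Z. (\<lambda>x. f x + g x) \<in> Z" and Zsc: "\<forall>c. \<forall>f\<in>Z. (\<lambda>x. c * f x) \<in> Z"
    and Zlin: "\<forall>f\<in>Z. (\<forall>x y. f (x + y) = f x + f y) \<and> (\<forall>c x. f (c *\<^sub>R x) = c * f x)"
    and Z0: "(\<lambda>x. 0) \<in> Z"
    and padd: "\<forall>f\<in>Z. \<forall>g\<in>Z. \<psi> (\<lambda>x. f x + g x) = \<psi> f + \<psi> g"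
    and psc: "\<forall>c. \<forall>f\<in>Z. \<psi> (\<lambda>x. c * f x) = c * \<psi> f"
    and cont: "continuous_on Z \<psi>"
  shows "\<exists>x0. \<forall>g\<in>Z. \<psi> g = g x0"
proof -
  have psi0: "\<psi> (\<lambda>x. 0) = 0" using psc[rule_format, OF Z0, of 0] by simp
  obtain A where A: "open A" "A \<inter> Z = \<psi> -` {-1<..<1} \<inter> Z"
    using cont unfolding continuous_on_open_invariant by (meson open_greaterThanLessThan)
  have "(\<lambda>x. 0) \<in> A" using A(2) Z0 psi0 by auto
  then obtain X where X: "(\<lambda>x. 0) \<in> (\<Pi>\<^sub>E i\<in>UNIV. X i)" "\<forall>i. openin euclidean (X i)"
    "finite {i. X i \<noteq> topspace euclidean}" "(\<Pi>\<^sub>E i\<in>UNIV. X i) \<subseteq> A"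
    using product_topology_open_contains_basis[of "\<lambda>i. euclidean" UNIV A] A(1)
    unfolding open_fun_def by blast
  define P where "P = {i. X i \<noteq> UNIV}"
  have finP: "finite P" using X(3) by (simp add: P_def)
  have "\<forall>i\<in>P. \<exists>e>0. \<forall>t. \<bar>t\<bar> < e \<longrightarrow> t \<in> X i"
  proof
    fix i
    have "open (X i)" "(0::real) \<in> X i" using X(1,2) by auto
    then obtain e where "e > 0" "ball 0 e \<subseteq> X i" using open_contains_ball by blast
    then show "\<exists>e>0. \<forall>t. \<bar>t\<bar> < e \<longrightarrow> t \<in> X i" by (auto simp: dist_real_def subset_iff)
  qed
  from bchoice[OF this] obtain E where E: "\<forall>i\<in>P. E i > 0 \<and> (\<forall>t. \<bar>t\<bar> < E i \<longrightarrow> t \<in> X i)" by blast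
  define \<epsilon> where "\<epsilon> = Min (insert 1 (E ` P))"
  have epos: "\<epsilon> > 0" unfolding \<epsilon>_def using finP E by (subst Min_gr_iff) auto
  have ele: "\<epsilon> \<le> E i" if "i \<in> P" for i unfolding \<epsilon>_def using finP that by (intro Min_le) auto
  have small: "\<bar>\<psi> g\<bar> < 1" if g: "g \<in> Z" "\<forall>p\<in>P. \<bar>g p\<bar> < \<epsilon>" for g
  proof -
    have "\<forall>i. g i \<in> X i"
    proof
      fix i show "g i \<in> X i"
      proof (cases "i \<in> P")
        case True then show ?thesis using E g(2) ele[OF True] by force
      next
        case False then show ?thesis by (simp add: P_def)
      qed
    qed
    then have "g \<in> (\<Pi>\<^sub>E i\<in>UNIV. X i)" by (simp add: PiE_UNIV_domain)
    then have "g \<in> A \<inter> Z" using X(4) g(1) by blast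
    then show ?thesis using A(2) by auto
  qed
  have ker: "\<psi> g = 0" if g: "g \<in> Z" "\<forall>p\<in>P. g p = 0" for g
  proof (rule ccontr)
    assume nz: "\<psi> g \<noteq> 0"
    define t where "t = 2 / \<bar>\<psi> g\<bar>"
    have "(\<lambda>x. t * g x) \<in> Z" using Zsc[rule_format, OF g(1)] .
    moreover have "\<forall>p\<in>P. \<bar>t * g p\<bar> < \<epsilon>" using g epos by simp
    ultimately have "\<bar>\<psi> (\<lambda>x. t * g x)\<bar> < 1" using small by blast
    moreover have "\<psi> (\<lambda>x. t * g x) = t * \<psi> g" using psc[rule_format, OF g(1)] .
    moreover have "\<bar>t * \<psi> g\<bar> = 2" using nz by (simp add: t_def abs_mult)
    ultimately show False by simp
  qed
  show ?thesis using fin_repr[OF Zadd Zsc Zlin finP, rule_format, OF conjI[OF padd conjI[OF psc]]] ker by blast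
qed


lemma dual_sp_add:
  assumes f: "f \<in> dual_sp S" and g: "g \<in> dual_sp S"
  shows "(\<lambda>x. f x + g x) \<in> dual_sp S"
proof -
  obtain Kf where Kf: "\<forall>x\<in>S. \<bar>f x\<bar> \<le> Kf * norm x" using dual_sp_D(3)[OF f] by blast
  obtain Kg where Kg: "\<forall>x\<in>S. \<bar>g x\<bar> \<le> Kg * norm x" using dual_sp_D(3)[OF g] by blast
  have "\<forall>x\<in>S. \<bar>f x + g x\<bar> \<le> (Kf + Kg) * norm x"
  proof
    fix x assume "x \<in> S"
    then have "\<bar>f x\<bar> \<le> Kf * norm x" "\<bar>g x\<bar> \<le> Kg * norm x" using Kf Kg by auto
    then show "\<bar>f x + g x\<bar> \<le> (Kf + Kg) * norm x" by (simp add: algebra_simps abs_triangle_ineq order_trans[OF abs_triangle_ineq])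
  qed
  then have "\<exists>K. \<forall>x\<in>S. \<bar>f x + g x\<bar> \<le> K * norm x" by blast
  then show ?thesis using f g unfolding dual_sp_def by (auto simp: algebra_simps)
qed

lemma dual_sp_scale:
  assumes f: "f \<in> dual_sp S"
  shows "(\<lambda>x. c * f x) \<in> dual_sp S"
proof -
  obtain Kf where Kf: "\<forall>x\<in>S. \<bar>f x\<bar> \<le> Kf * norm x" using dual_sp_D(3)[OF f] by blast
  have "\<forall>x\<in>S. \<bar>c * f x\<bar> \<le> (\<bar>c\<bar> * Kf) * norm x"
    using Kf by (simp add: abs_mult mult.assoc mult_left_mono)
  then have "\<exists>K. \<forall>x\<in>S. \<bar>c * f x\<bar> \<le> K * norm x" by blast
  then show ?thesis using f unfolding dual_sp_def by (auto simp: algebra_simps)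
qed

lemma dual_sp_diff:
  assumes f: "f \<in> dual_sp S" and g: "g \<in> dual_sp S"
  shows "(\<lambda>x. f x - g x) \<in> dual_sp S"
  using dual_sp_add[OF f dual_sp_scale[OF g, of "-1"]] by simp

lemma dual_sp_zero: "(\<lambda>x. 0) \<in> dual_sp S"
  unfolding dual_sp_def by (auto intro!: exI[of _ 0])

lemma restr_dual:
  assumes S: "subspace S" and g: "g \<in> dual_sp UNIV"
  shows "restr S g \<in> dual_sp S"
proof -
  obtain K where K: "\<forall>x. \<bar>g x\<bar> \<le> K * norm x" using dual_sp_D(3)[OF g] by blast
  show ?thesis unfolding dual_sp_def restr_def
    using dual_sp_D(1,2)[OF g] K S by (auto simp: subspace_add subspace_scale)
qed

lemma restr_add: "restr S (\<lambda>x. f x + g x) = (\<lambda>x. restr S f x + restr S g x)"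
  by (auto simp: restr_def)
lemma restr_scale: "restr S (\<lambda>x. c * f x) = (\<lambda>x. c * restr S f x)"
  by (auto simp: restr_def)
lemma restr_diff: "restr S (\<lambda>x. f x - g x) = (\<lambda>x. restr S f x - restr S g x)"
  by (auto simp: restr_def)
lemma restr_zero: "restr S (\<lambda>x. 0) = (\<lambda>x. 0)"
  by (auto simp: restr_def)
lemma restr_vanish: "\<forall>x\<in>S. g x = 0 \<Longrightarrow> restr S g = (\<lambda>x. 0)"
  by (auto simp: restr_def)

lemma dnorm_restr:
  assumes S: "subspace S" and g: "g \<in> dual_sp UNIV"
  shows "dnorm S (restr S g) \<le> dnorm UNIV g"
  using dnorm_bound[OF g subspace_UNIV] dnorm_nonneg[OF g subspace_UNIV]
  by (intro dnorm_le[OF S]) (auto simp: restr_def)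

lemma continuous_restr: "continuous_on UNIV (restr S)"
  unfolding restr_def
proof (intro continuous_on_coordinatewise_then_product)
  fix i show "continuous_on UNIV (\<lambda>g::'a \<Rightarrow> real. if i \<in> S then g i else 0)"
    by (cases "i \<in> S") (auto intro: continuous_on_product_coordinates)
qed

lemma Ynorm_upper:
  assumes Z: "Z \<subseteq> dual_sp UNIV" and Z0: "(\<lambda>x. 0) \<in> Z"
  shows "Ynorm UNIV Z x \<le> norm x"
  unfolding Ynorm_def
proof (rule cSup_least)
  have "dnorm UNIV (\<lambda>x::'a. 0::real) \<le> 1" by (intro dnorm_le) auto
  then show "{f x |f. f \<in> Z \<and> dnorm UNIV f \<le> 1} \<noteq> {}" using Z0 by blast
next
  fix v assume "v \<in> {f x |f. f \<in> Z \<and> dnorm UNIV f \<le> 1}"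
  then obtain f where f: "f \<in> Z" "dnorm UNIV f \<le> 1" "v = f x" by blast
  have "\<bar>f x\<bar> \<le> dnorm UNIV f * norm x" using dnorm_bound[of f UNIV x] f Z by auto
  also have "\<dots> \<le> norm x" using mult_right_mono[OF f(2) norm_ge_zero[of x]] by simp
  finally show "v \<le> norm x" using f(3) by simp
qed

lemma Ynorm_ge:
  assumes Z: "Z \<subseteq> dual_sp UNIV" and f: "f \<in> Z" "dnorm UNIV f \<le> 1"
  shows "f x \<le> Ynorm UNIV Z x"
  unfolding Ynorm_def
proof (rule cSup_upper)
  show "f x \<in> {f x |f. f \<in> Z \<and> dnorm UNIV f \<le> 1}" using f by blast
  have "g x \<le> norm x" if "g \<in> Z" "dnorm UNIV g \<le> 1" for g
  proof -
    have "\<bar>g x\<bar> \<le> dnorm UNIV g * norm x" using dnorm_bound[of g UNIV x] that Z by auto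
    also have "\<dots> \<le> norm x" using mult_right_mono[OF that(2) norm_ge_zero[of x]] by simp
    finally show ?thesis by simp
  qed
  then show "bdd_above {f x |f. f \<in> Z \<and> dnorm UNIV f \<le> 1}" unfolding bdd_above_def by blast
qed

lemma infdist_approx:
  assumes "S \<noteq> {}" "e > 0"
  shows "\<exists>s\<in>S. dist x s < infdist x S + e"
proof (rule ccontr)
  assume "\<not> ?thesis"
  then have "\<forall>s\<in>S. infdist x S + e \<le> dist x s" by auto
  then have "infdist x S + e \<le> infdist x S"
    unfolding infdist_notempty[OF assms(1)] using assms(1) by (intro cINF_greatest) auto
  then show False using assms(2) by simp
qed

lemma Z_good:
  fixes S :: "'a::real_normed_vector set"
  assumes S: "subspace S" and cS: "closed S" and dsY: "dual_subspace S Y" and nY: "norming S Y"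
    and ncY: "norm_closed S Y"
  shows "dual_subspace UNIV {g \<in> dual_sp UNIV. restr S g \<in> Y} \<and>
         norming UNIV {g \<in> dual_sp UNIV. restr S g \<in> Y} \<and>
         norm_closed UNIV {g \<in> dual_sp UNIV. restr S g \<in> Y}"
proof -
  define Z where "Z = {g \<in> dual_sp UNIV. restr S g \<in> Y}"
  have Ysub: "Y \<subseteq> dual_sp S" and Y0: "(\<lambda>x. 0) \<in> Y"
    and Yadd: "\<forall>f\<in>Y. \<forall>g\<in>Y. (\<lambda>x. f x + g x) \<in> Y" and Ysc: "\<forall>c. \<forall>f\<in>Y. (\<lambda>x. c * f x) \<in> Y"
    using dsY unfolding dual_subspace_def by auto
  have Zsub: "Z \<subseteq> dual_sp UNIV" by (auto simp: Z_def)
  have Z0: "(\<lambda>x. 0) \<in> Z" using Y0 dual_sp_zero by (simp add: Z_def restr_zero)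
  have ds: "dual_subspace UNIV Z" unfolding dual_subspace_def
  proof (intro conjI ballI allI Zsub Z0)
    fix f g assume "f \<in> Z" "g \<in> Z"
    then have "f \<in> dual_sp UNIV" "g \<in> dual_sp UNIV" "restr S f \<in> Y" "restr S g \<in> Y" by (auto simp: Z_def)
    then show "(\<lambda>x. f x + g x) \<in> Z" using Yadd[rule_format, of "restr S f" "restr S g"] dual_sp_add
      by (simp add: Z_def restr_add)
  next
    fix c f assume "f \<in> Z"
    then have "f \<in> dual_sp UNIV" "restr S f \<in> Y" by (auto simp: Z_def)
    then show "(\<lambda>x. c * f x) \<in> Z" using Ysc[rule_format, of "restr S f" c] dual_sp_scale
      by (simp add: Z_def restr_scale)
  qed
  have nc: "norm_closed UNIV Z" unfolding norm_closed_def
  proof (intro ballI impI)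
    fix g assume g: "g \<in> dual_sp UNIV" and ap: "\<forall>e>0. \<exists>f\<in>Z. dnorm UNIV (\<lambda>x. f x - g x) < e"
    have A: "restr S g \<in> dual_sp S" using restr_dual[OF S g] .
    have B: "\<forall>e>0. \<exists>f\<in>Y. dnorm S (\<lambda>x. f x - restr S g x) < e"
    proof (intro allI impI)
      fix e :: real assume "e > 0"
      then obtain f where f: "f \<in> Z" "dnorm UNIV (\<lambda>x. f x - g x) < e" using ap by blast
      have fd: "(\<lambda>x. f x - g x) \<in> dual_sp UNIV" using dual_sp_diff f(1) g by (auto simp: Z_def)
      have "dnorm S (\<lambda>x. restr S f x - restr S g x) = dnorm S (restr S (\<lambda>x. f x - g x))"
        by (simp add: restr_diff)
      also have "\<dots> \<le> dnorm UNIV (\<lambda>x. f x - g x)" using dnorm_restr[OF S fd] .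
      finally have "dnorm S (\<lambda>x. restr S f x - restr S g x) < e" using f(2) by simp
      moreover have "restr S f \<in> Y" using f(1) by (simp add: Z_def)
      ultimately show "\<exists>f\<in>Y. dnorm S (\<lambda>x. f x - restr S g x) < e" by blast
    qed
    have "restr S g \<in> Y" using ncY A B unfolding norm_closed_def by blast
    then show "g \<in> Z" using g by (simp add: Z_def)
  qed
  obtain cY CY where cY: "cY > 0" and nYb: "\<forall>s\<in>S. cY * norm s \<le> Ynorm S Y s"
    using nY unfolding norming_def by blast
  have Sne: "S \<noteq> {}" using subspace_0[OF S] by auto
  have lower: "cY / (3 + 2 * cY) * norm x \<le> Ynorm UNIV Z x" for x
  proof -
    define N where "N = Ynorm UNIV Z x"
    define d where "d = infdist x S"
    have d0: "d \<ge> 0" by (simp add: d_def infdist_nonneg)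
    have dz1: "dnorm UNIV (\<lambda>x::'a. 0::real) \<le> 1" by (intro dnorm_le) auto
    have N0: "0 \<le> N" unfolding N_def using Ynorm_ge[OF Zsub Z0 dz1, of x] by simp
    have dN: "d \<le> N"
    proof (cases "x \<in> S")
      case True then show ?thesis using N0 by (simp add: d_def)
    next
      case False
      from sep_functional[OF S cS False] obtain g where g: "g \<in> dual_sp UNIV" "\<forall>x\<in>S. g x = 0"
        "g x = infdist x S" "dnorm UNIV g \<le> 1" by blast
      have "g \<in> Z" using g Y0 by (simp add: Z_def restr_vanish)
      from Ynorm_ge[OF Zsub this g(4), of x] show ?thesis using g(3) by (simp add: N_def d_def)
    qed
    obtain s where sS: "s \<in> S" and xs: "norm (x - s) \<le> 2 * d"
    proof (cases "x \<in> S")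
      case True then show ?thesis using that[of x] d0 by simp
    next
      case False
      then have "d > 0" unfolding d_def using infdist_pos_not_in_closed[OF cS Sne] by blast
      from infdist_approx[OF Sne this, of x] obtain s where "s \<in> S" "dist x s < d + d"
        by (auto simp: d_def)
      then show ?thesis using that[of s] by (simp add: dist_norm)
    qed
    have YS: "Ynorm S Y s \<le> N + norm (x - s)"
      unfolding Ynorm_def
    proof (rule cSup_least)
      have "dnorm S (\<lambda>x::'a. 0::real) \<le> 1" by (intro dnorm_le[OF S]) auto
      then show "{f s |f. f \<in> Y \<and> dnorm S f \<le> 1} \<noteq> {}" using Y0 by blast
    next
      fix v assume "v \<in> {f s |f. f \<in> Y \<and> dnorm S f \<le> 1}"
      then obtain f where f: "f \<in> Y" "dnorm S f \<le> 1" "v = f s" by blast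
      from ext_dual[OF S _ f(2)] f(1) Ysub obtain g where g: "g \<in> dual_sp UNIV" "\<forall>x\<in>S. g x = f x"
        "dnorm UNIV g \<le> 1" "restr S g = f" by blast
      have gZ: "g \<in> Z" using g f(1) by (simp add: Z_def)
      have "g x \<le> N" unfolding N_def using Ynorm_ge[OF Zsub gZ g(3)] .
      moreover have "\<bar>g (x - s)\<bar> \<le> norm (x - s)"
      proof -
        have "\<bar>g (x - s)\<bar> \<le> dnorm UNIV g * norm (x - s)" using dnorm_bound[OF g(1) subspace_UNIV] by simp
        also have "\<dots> \<le> norm (x - s)" using mult_right_mono[OF g(3) norm_ge_zero[of "x - s"]] by simp
        finally show ?thesis .
      qed
      moreover have "g x = g (x - s) + g s" using dual_sp_D(1)[OF g(1), of "x - s" s] by simp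
      moreover have "g s = f s" using g(2) sS by simp
      ultimately show "v \<le> N + norm (x - s)" using f(3) by linarith
    qed
    have "cY * norm s \<le> N + norm (x - s)" using nYb sS YS by force
    moreover have "norm x \<le> norm s + norm (x - s)" by (metis add.commute diff_add_cancel norm_triangle_ineq)
    then have "cY * norm x \<le> cY * norm s + cY * norm (x - s)" using cY
      by (metis distrib_left mult_left_mono less_imp_le)
    moreover have "cY * norm (x - s) \<le> cY * (2 * N)" using xs dN cY by (intro mult_left_mono) auto
    moreover have "norm (x - s) \<le> 2 * N" using xs dN by linarith
    ultimately have "cY * norm x \<le> (3 + 2 * cY) * N" by (simp add: algebra_simps)
    then show ?thesis using cY by (simp add: N_def pos_divide_le_eq mult.commute)
  qed
  have nm: "norming UNIV Z" unfolding norming_def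
  proof (intro exI conjI ballI)
    show "cY / (3 + 2 * cY) > 0" using cY by simp
    show "(1::real) > 0" by simp
    fix x :: 'a
    show "cY / (3 + 2 * cY) * norm x \<le> Ynorm UNIV Z x" using lower .
    show "Ynorm UNIV Z x \<le> 1 * norm x" using Ynorm_upper[OF Zsub Z0] by simp
  qed
  show ?thesis using ds nm nc by (simp add: Z_def)
qed


lemma mazur_part:
  fixes S :: "'a::banach set"
  assumes S: "subspace S" and cS: "closed S" and M: "fully_Mazur (UNIV :: 'a set)"
  shows "fully_Mazur S"
  unfolding fully_Mazur_def
proof (intro allI impI)
  fix Y assume Y: "dual_subspace S Y \<and> norming S Y \<and> norm_closed S Y"
  fix \<phi> :: "('a \<Rightarrow> real) \<Rightarrow> real"
  assume \<phi>: "(\<forall>f\<in>Y. \<forall>g\<in>Y. \<phi> (\<lambda>x. f x + g x) = \<phi> f + \<phi> g) \<and>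
            (\<forall>c. \<forall>f\<in>Y. \<phi> (\<lambda>x. c * f x) = c * \<phi> f) \<and>
            (\<forall>F f. (\<forall>n. F n \<in> Y) \<and> f \<in> Y \<and> F \<longlonglongrightarrow> f \<longrightarrow> (\<lambda>n. \<phi> (F n)) \<longlonglongrightarrow> \<phi> f)"
  have \<phi>add: "\<phi> (\<lambda>x. f x + g x) = \<phi> f + \<phi> g" if "f \<in> Y" "g \<in> Y" for f g
    using \<phi>[THEN conjunct1, rule_format, OF that] .
  have \<phi>sc: "\<phi> (\<lambda>x. c * f x) = c * \<phi> f" if "f \<in> Y" for c f
    using \<phi>[THEN conjunct2, THEN conjunct1, rule_format, OF that] .
  have \<phi>seq: "(\<lambda>n. \<phi> (F n)) \<longlonglongrightarrow> \<phi> f" if "\<forall>n. F n \<in> Y" "f \<in> Y" "F \<longlonglongrightarrow> f" for F f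
    using \<phi>[THEN conjunct2, THEN conjunct2] that by blast
  have dsY: "dual_subspace S Y" and nY: "norming S Y" and ncY: "norm_closed S Y" using Y by auto
  have Ysub: "Y \<subseteq> dual_sp S" and Y0: "(\<lambda>x. 0) \<in> Y"
    using dsY unfolding dual_subspace_def by auto
  define Z where "Z = {g \<in> dual_sp UNIV. restr S g \<in> Y}"
  have Zg: "dual_subspace UNIV Z \<and> norming UNIV Z \<and> norm_closed UNIV Z"
    using Z_good[OF S cS dsY nY ncY] by (simp add: Z_def)
  have Zsub: "Z \<subseteq> dual_sp UNIV" and Z0: "(\<lambda>x. 0) \<in> Z"
    and Zadd: "\<forall>f\<in>Z. \<forall>g\<in>Z. (\<lambda>x. f x + g x) \<in> Z" and Zsc: "\<forall>c. \<forall>f\<in>Z. (\<lambda>x. c * f x) \<in> Z"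
    using Zg unfolding dual_subspace_def by auto
  have Zlin: "\<forall>f\<in>Z. (\<forall>x y. f (x + y) = f x + f y) \<and> (\<forall>c x. f (c *\<^sub>R x) = c * f x)"
    using Zsub unfolding dual_sp_def by blast
  define \<psi> where "\<psi> g = \<phi> (restr S g)" for g
  have rY: "restr S g \<in> Y" if "g \<in> Z" for g using that by (simp add: Z_def)
  have padd: "\<forall>f\<in>Z. \<forall>g\<in>Z. \<psi> (\<lambda>x. f x + g x) = \<psi> f + \<psi> g"
  proof (intro ballI)
    fix f g assume "f \<in> Z" "g \<in> Z"
    show "\<psi> (\<lambda>x. f x + g x) = \<psi> f + \<psi> g" unfolding \<psi>_def restr_add
      by (rule \<phi>add[OF rY[OF \<open>f \<in> Z\<close>] rY[OF \<open>g \<in> Z\<close>]])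
  qed
  have psc: "\<forall>c. \<forall>f\<in>Z. \<psi> (\<lambda>x. c * f x) = c * \<psi> f"
  proof (intro ballI allI)
    fix c f assume "f \<in> Z"
    show "\<psi> (\<lambda>x. c * f x) = c * \<psi> f" unfolding \<psi>_def restr_scale
      by (rule \<phi>sc[OF rY[OF \<open>f \<in> Z\<close>]])
  qed
  have pseq: "\<forall>F f. (\<forall>n. F n \<in> Z) \<and> f \<in> Z \<and> F \<longlonglongrightarrow> f \<longrightarrow> (\<lambda>n. \<psi> (F n)) \<longlonglongrightarrow> \<psi> f"
  proof (intro allI impI)
    fix F f assume H: "(\<forall>n. F n \<in> Z) \<and> f \<in> Z \<and> F \<longlonglongrightarrow> f"
    have "(\<lambda>n. restr S (F n)) \<longlonglongrightarrow> restr S f"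
      using continuous_on_tendsto_compose[OF continuous_restr, of F f sequentially] H by simp
    moreover have "\<forall>n. restr S (F n) \<in> Y" using H rY by blast
    ultimately show "(\<lambda>n. \<psi> (F n)) \<longlonglongrightarrow> \<psi> f" unfolding \<psi>_def using \<phi>seq[of "\<lambda>n. restr S (F n)" "restr S f"] H rY by blast
  qed
  have "\<forall>\<phi>. (\<forall>f\<in>Z. \<forall>g\<in>Z. \<phi> (\<lambda>x. f x + g x) = \<phi> f + \<phi> g) \<and>
            (\<forall>c. \<forall>f\<in>Z. \<phi> (\<lambda>x. c * f x) = c * \<phi> f) \<and>
            (\<forall>F f. (\<forall>n. F n \<in> Z) \<and> f \<in> Z \<and> F \<longlonglongrightarrow> f \<longrightarrow> (\<lambda>n. \<phi> (F n)) \<longlonglongrightarrow> \<phi> f)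
            \<longrightarrow> continuous_on Z \<phi>"
    using M Zg unfolding fully_Mazur_def by blast
  then have cont: "continuous_on Z \<psi>" using padd psc pseq by (elim allE[of _ \<psi>]) blast
  obtain x0 where x0: "\<forall>g\<in>Z. \<psi> g = g x0" using cont_repr[OF Zadd Zsc Zlin Z0 padd psc cont] by blast
  have \<phi>0: "\<phi> (\<lambda>x. 0) = 0" using \<phi>sc[OF Y0, of 0] by simp
  have x0S: "x0 \<in> S"
  proof (rule ccontr)
    assume "x0 \<notin> S"
    from sep_functional[OF S cS this] obtain g where g: "g \<in> dual_sp UNIV" "\<forall>x\<in>S. g x = 0"
      "g x0 = infdist x0 S" "infdist x0 S > 0" by blast
    have "g \<in> Z" using g Y0 by (simp add: Z_def restr_vanish)
    then have "\<psi> g = g x0" using x0 by blast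
    moreover have "\<psi> g = 0" using g(2) \<phi>0 by (simp add: \<psi>_def restr_vanish)
    ultimately show False using g(3,4) by simp
  qed
  have rep: "\<phi> y = y x0" if y: "y \<in> Y" for y
  proof -
    from ext_dual[OF S _ order_refl] y Ysub obtain g where g: "g \<in> dual_sp UNIV" "\<forall>x\<in>S. g x = y x"
      "restr S g = y" by blast
    have "g \<in> Z" using g y by (simp add: Z_def)
    then have "\<psi> g = g x0" using x0 by blast
    then show ?thesis using g x0S by (simp add: \<psi>_def)
  qed
  have "continuous_on Y (\<lambda>y. y x0)"
    by (rule continuous_on_subset[OF continuous_on_product_coordinates]) simp
  then show "continuous_on Y \<phi>" using continuous_on_cong[of Y Y \<phi> "\<lambda>y. y x0"] rep by simp
qed


lemma dual_cont:
  assumes S: "subspace S" and f: "f \<in> dual_sp S"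
  shows "continuous_on S f"
  unfolding continuous_on_iff
proof (intro ballI allI impI)
  fix x e assume x: "x \<in> S" and e: "(e::real) > 0"
  define L where "L = dnorm S f + 1"
  have L: "L > 0" using dnorm_nonneg[OF f S] by (simp add: L_def)
  show "\<exists>d>0. \<forall>x'\<in>S. dist x' x < d \<longrightarrow> dist (f x') (f x) < e"
  proof (intro exI[of _ "e / L"] conjI ballI impI)
    show "e / L > 0" using e L by simp
    fix x' assume x': "x' \<in> S" and d: "dist x' x < e / L"
    have xx: "x' - x \<in> S" using S x x' by (simp add: subspace_diff)
    have "f x' = f (x' - x) + f x" using dual_sp_D(1)[OF f xx x] by simp
    then have "dist (f x') (f x) = \<bar>f (x' - x)\<bar>" by (simp add: dist_real_def)
    also have "\<dots> \<le> dnorm S f * norm (x' - x)" using dnorm_bound[OF f S xx] .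
    also have "\<dots> \<le> L * norm (x' - x)" by (simp add: L_def mult_right_mono)
    also have "\<dots> < L * (e / L)" using d L by (intro mult_strict_left_mono) (auto simp: dist_norm)
    also have "\<dots> = e" using L by simp
    finally show "dist (f x') (f x) < e" .
  qed
qed

lemma ubp:
  fixes S :: "'a::banach set"
  assumes S: "subspace S" and cS: "closed S" and KS: "K \<subseteq> dual_sp S" and cK: "compact K"
  shows "\<exists>M\<ge>0. \<forall>f\<in>K. dnorm S f \<le> M"
proof -
  have pw: "\<exists>b. \<forall>f\<in>K. \<bar>f s\<bar> \<le> b" for s
  proof -
    have "compact ((\<lambda>f. f s) ` K)"
      by (rule compact_continuous_image[OF continuous_on_subset[OF continuous_on_product_coordinates] cK]) simp
    then have "bounded ((\<lambda>f. f s) ` K)" by (rule compact_imp_bounded)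
    then obtain b where "\<forall>v\<in>(\<lambda>f. f s) ` K. norm v \<le> b" unfolding bounded_iff by blast
    then show ?thesis by auto
  qed
  define A where "A n = {s \<in> S. \<forall>f\<in>K. \<bar>f s\<bar> \<le> real n}" for n
  have Acl: "closedin (top_of_set S) (A n)" for n
  proof -
    have eq: "A n = \<Inter> (insert S ((\<lambda>f. S \<inter> f -` {- real n..real n}) ` K))"
      by (auto simp: A_def abs_le_iff)
    show ?thesis unfolding eq
    proof (rule closedin_Inter)
      fix T assume "T \<in> insert S ((\<lambda>f. S \<inter> f -` {- real n..real n}) ` K)"
      then show "closedin (top_of_set S) T"
      proof
        assume "T = S" then show ?thesis by simp
      next
        assume "T \<in> (\<lambda>f. S \<inter> f -` {- real n..real n}) ` K"
        then obtain f where "f \<in> K" "T = S \<inter> f -` {- real n..real n}" by blast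
        then show ?thesis using continuous_closedin_preimage[OF dual_cont[OF S] closed_atLeastAtMost] KS by blast
      qed
    qed simp
  qed
  have Aun: "\<Union> (range A) = S"
  proof
    show "\<Union> (range A) \<subseteq> S" by (auto simp: A_def)
    show "S \<subseteq> \<Union> (range A)"
    proof
      fix s assume "s \<in> S"
      obtain b where b: "\<forall>f\<in>K. \<bar>f s\<bar> \<le> b" using pw by blast
      obtain n where "b \<le> real n" using real_arch_simple by blast
      then have "s \<in> A n" using b \<open>s \<in> S\<close> by (force simp: A_def)
      then show "s \<in> \<Union> (range A)" by blast
    qed
  qed
  have cms: "completely_metrizable_space (top_of_set S)"
  proof (rule completely_metrizable_space_closedin[OF completely_metrizable_space_euclidean])
    show "closedin euclidean S" using cS closed_closedin by blast
  qed
  have "\<exists>n. (top_of_set S) interior_of (A n) \<noteq> {}"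
  proof (rule ccontr)
    assume "\<not> ?thesis"
    then have "\<forall>T\<in>range A. closedin (top_of_set S) T \<and> (top_of_set S) interior_of T = {}" using Acl by auto
    then have "(top_of_set S) interior_of \<Union> (range A) = {}"
      by (intro Baire_category_alt disjI1 cms) auto
    then have "S = {}" using Aun by (metis interior_of_topspace topspace_euclidean_subtopology)
    then show False using subspace_0[OF S] by auto
  qed
  then obtain n s0 where "s0 \<in> (top_of_set S) interior_of (A n)" by blast
  then obtain T where T: "openin (top_of_set S) T" "s0 \<in> T" "T \<subseteq> A n" unfolding interior_of_def by blast
  then obtain U where U: "open U" "T = S \<inter> U" unfolding openin_open by blast
  then obtain \<delta> where \<delta>: "\<delta> > 0" "ball s0 \<delta> \<subseteq> U" using T(2) open_contains_ball by blast
  have s0A: "s0 \<in> A n" using T by blast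
  then have s0S: "s0 \<in> S" by (simp add: A_def)
  have bnd: "\<bar>f s\<bar> \<le> (4 * real n / \<delta>) * norm s" if f: "f \<in> K" and s: "s \<in> S" for f s
  proof (cases "s = 0")
    case True then show ?thesis using dual_sp_0[of f S] KS f S by auto
  next
    case False
    have fd: "f \<in> dual_sp S" using KS f by blast
    define c where "c = \<delta> / (2 * norm s)"
    have c: "c > 0" using False \<delta> by (simp add: c_def)
    define u where "u = c *\<^sub>R s"
    have uS: "u \<in> S" using S s by (simp add: u_def subspace_scale)
    have nu: "norm u = \<delta> / 2" using False c \<delta>(1) by (simp add: u_def c_def)
    have "s0 + u \<in> ball s0 \<delta>" using nu \<delta> by (simp add: dist_norm)
    then have "s0 + u \<in> A n" using \<delta>(2) U(2) T(3) subspace_add[OF S s0S uS] by blast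
    then have h1: "\<bar>f (s0 + u)\<bar> \<le> real n" using f by (simp add: A_def)
    have h2: "\<bar>f s0\<bar> \<le> real n" using s0A f by (simp add: A_def)
    have "f (s0 + u) = f s0 + f u" using dual_sp_D(1)[OF fd s0S uS] .
    then have "\<bar>f u\<bar> \<le> 2 * real n" using h1 h2 by linarith
    moreover have "f u = c * f s" using dual_sp_D(2)[OF fd s] by (simp add: u_def)
    ultimately have "c * \<bar>f s\<bar> \<le> 2 * real n" using c by (simp add: abs_mult)
    then have "\<bar>f s\<bar> \<le> 2 * real n / c" using c by (simp add: le_divide_eq mult.commute)
    also have "2 * real n / c = (4 * real n / \<delta>) * norm s" using False \<delta> by (simp add: c_def field_simps)
    finally show ?thesis .
  qed
  show ?thesis
  proof (intro exI[of _ "4 * real n / \<delta>"] conjI ballI)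
    show "4 * real n / \<delta> \<ge> 0" using \<delta> by simp
    fix f assume "f \<in> K"
    then show "dnorm S f \<le> 4 * real n / \<delta>" using bnd \<delta> by (intro dnorm_le[OF S]) auto
  qed
qed


lemma compact_closed_fun:
  fixes K :: "('a \<Rightarrow> real) set"
  assumes "compact K"
  shows "closed K"
proof -
  have H: "Hausdorff_space (euclidean :: ('a \<Rightarrow> real) topology)"
    unfolding euclidean_product_topology[symmetric] Hausdorff_space_product_topology by simp
  have "compactin euclidean K" using assms by simp
  then have "closedin euclidean K" by (rule compactin_imp_closedin[OF H])
  then show ?thesis using closed_closedin by blast
qed

lemma compact_box_fun:
  fixes B :: "'a \<Rightarrow> real"
  shows "compact (PiE UNIV (\<lambda>x. {- B x..B x}))"
proof -
  have "compactin (product_topology (\<lambda>_. euclidean) UNIV) (PiE UNIV (\<lambda>x. {- B x..B x}))"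
    unfolding compactin_PiE by simp
  then show ?thesis unfolding euclidean_product_topology by simp
qed

lemma mackey_part:
  fixes S :: "'a::banach set"
  assumes S: "subspace S" and cS: "closed S" and M: "fully_Mackey_complete (UNIV :: 'a set)"
  shows "fully_Mackey_complete S"
  unfolding fully_Mackey_complete_def
proof (intro allI impI)
  fix Y assume Y: "dual_subspace S Y \<and> norming S Y \<and> norm_closed S Y"
  have dsY: "dual_subspace S Y" and nY: "norming S Y" and ncY: "norm_closed S Y" using Y by auto
  have Ysub: "Y \<subseteq> dual_sp S" and Y0: "(\<lambda>x. 0) \<in> Y"
    using dsY unfolding dual_subspace_def by auto
  define Z where "Z = {g \<in> dual_sp UNIV. restr S g \<in> Y}"
  have Zg: "dual_subspace UNIV Z \<and> norming UNIV Z \<and> norm_closed UNIV Z"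
    using Z_good[OF S cS dsY nY ncY] by (simp add: Z_def)
  have Zsub: "Z \<subseteq> dual_sp UNIV" and Zsc: "\<forall>c. \<forall>f\<in>Z. (\<lambda>x. c * f x) \<in> Z"
    using Zg unfolding dual_subspace_def by auto
  have MZ: "mackey_complete UNIV Z" using M Zg unfolding fully_Mackey_complete_def by blast
  show "mackey_complete S Y" unfolding mackey_complete_def
  proof (intro allI impI)
    fix F :: "'a filter"
    assume F: "F \<noteq> bot \<and> eventually (\<lambda>x. x \<in> S) F \<and>
        (\<forall>K\<in>mackey_sets Y. \<forall>e>0. eventually (\<lambda>(x, y). \<forall>f\<in>K. \<bar>f x - f y\<bar> \<le> e) (F \<times>\<^sub>F F))"
    have Fnb: "F \<noteq> bot" and FS: "eventually (\<lambda>x. x \<in> S) F"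
      and FC: "\<And>K e. K \<in> mackey_sets Y \<Longrightarrow> e > 0 \<Longrightarrow> eventually (\<lambda>(x, y). \<forall>f\<in>K. \<bar>f x - f y\<bar> \<le> e) (F \<times>\<^sub>F F)"
      using F by auto
    have FSS: "eventually (\<lambda>p. fst p \<in> S \<and> snd p \<in> S) (F \<times>\<^sub>F F)"
      using eventually_prodI[OF FS FS] .
    have cauchyZ: "\<forall>K'\<in>mackey_sets Z. \<forall>e>0. eventually (\<lambda>(x, y). \<forall>f\<in>K'. \<bar>f x - f y\<bar> \<le> e) (F \<times>\<^sub>F F)"
    proof (intro ballI allI impI)
      fix K' e assume K': "K' \<in> mackey_sets Z" and e: "(e::real) > 0"
      have K'Z: "K' \<subseteq> Z" and cK': "compact K'"
        and acK': "\<forall>f\<in>K'. \<forall>g\<in>K'. \<forall>a b. \<bar>a\<bar> + \<bar>b\<bar> \<le> 1 \<longrightarrow> (\<lambda>x. a * f x + b * g x) \<in> K'"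
        using K' unfolding mackey_sets_def by auto
      define K where "K = restr S ` K'"
      have "K \<in> mackey_sets Y" unfolding mackey_sets_def
      proof (intro CollectI conjI ballI allI impI)
        show "K \<subseteq> Y" using K'Z by (auto simp: K_def Z_def)
        show "compact K" unfolding K_def
          by (rule compact_continuous_image[OF continuous_on_subset[OF continuous_restr] cK']) simp
        fix f g a b assume fg: "f \<in> K" "g \<in> K" and ab: "\<bar>a\<bar> + \<bar>b\<bar> \<le> (1::real)"
        then obtain f' g' where f': "f' \<in> K'" "f = restr S f'" and g': "g' \<in> K'" "g = restr S g'"
          by (auto simp: K_def)
        have "(\<lambda>x. a * f' x + b * g' x) \<in> K'" using acK' f'(1) g'(1) ab by blast
        moreover have "(\<lambda>x. a * f x + b * g x) = restr S (\<lambda>x. a * f' x + b * g' x)"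
          using f'(2) g'(2) by (auto simp: restr_def fun_eq_iff)
        ultimately show "(\<lambda>x. a * f x + b * g x) \<in> K" unfolding K_def by blast
      qed
      from FC[OF this e] FSS show "eventually (\<lambda>(x, y). \<forall>f\<in>K'. \<bar>f x - f y\<bar> \<le> e) (F \<times>\<^sub>F F)"
      proof (rule eventually_elim2)
        fix p :: "'a \<times> 'a"
        assume h: "case p of (x, y) \<Rightarrow> \<forall>f\<in>K. \<bar>f x - f y\<bar> \<le> e" and pS: "fst p \<in> S \<and> snd p \<in> S"
        obtain x y where p: "p = (x, y)" by fastforce
        show "case p of (x, y) \<Rightarrow> \<forall>f\<in>K'. \<bar>f x - f y\<bar> \<le> e"
          unfolding p
        proof (simp only: prod.case, intro ballI)
          fix f assume "f \<in> K'"
          then have "restr S f \<in> K" by (simp add: K_def)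
          then have "\<bar>restr S f x - restr S f y\<bar> \<le> e" using h p by auto
          then show "\<bar>f x - f y\<bar> \<le> e" using pS p by (simp add: restr_def)
        qed
      qed
    qed
    have FU: "eventually (\<lambda>x. x \<in> (UNIV :: 'a set)) F" by simp
    have "\<exists>z\<in>UNIV. \<forall>K\<in>mackey_sets Z. \<forall>e>0. eventually (\<lambda>x. \<forall>f\<in>K. \<bar>f x - f z\<bar> \<le> e) F"
      using MZ unfolding mackey_complete_def
    proof (elim allE[of _ F] impE)
      show "F \<noteq> bot \<and> eventually (\<lambda>x. x \<in> UNIV) F \<and>
        (\<forall>K\<in>mackey_sets Z. \<forall>e>0. eventually (\<lambda>(x, y). \<forall>f\<in>K. \<bar>f x - f y\<bar> \<le> e) (F \<times>\<^sub>F F))"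
        using Fnb FU cauchyZ by (intro conjI)
    qed
    then obtain z where z0: "\<forall>K\<in>mackey_sets Z. \<forall>e>0. eventually (\<lambda>x. \<forall>f\<in>K. \<bar>f x - f z\<bar> \<le> e) F"
      by blast
    have z: "eventually (\<lambda>x. \<forall>f\<in>K. \<bar>f x - f z\<bar> \<le> e) F" if "K \<in> mackey_sets Z" "e > 0" for K e
      using z0 that by blast
    have zS: "z \<in> S"
    proof (rule ccontr)
      assume "z \<notin> S"
      from sep_functional[OF S cS this] obtain g where g: "g \<in> dual_sp UNIV" "\<forall>x\<in>S. g x = 0"
        "g z = infdist z S" "infdist z S > 0" by blast
      define d where "d = infdist z S"
      have gZ: "g \<in> Z" using g Y0 by (simp add: Z_def restr_vanish)
      define K' where "K' = (\<lambda>t. (\<lambda>x. t * g x)) ` {-1..1::real}"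
      have "K' \<in> mackey_sets Z" unfolding mackey_sets_def
      proof (intro CollectI conjI ballI allI impI)
        show "K' \<subseteq> Z" unfolding K'_def using Zsc gZ by blast
        show "compact K'" unfolding K'_def
          by (intro compact_continuous_image continuous_on_coordinatewise_then_product continuous_intros) simp
        fix f h a b assume fh: "f \<in> K'" "h \<in> K'" and ab: "\<bar>a\<bar> + \<bar>b\<bar> \<le> (1::real)"
        then obtain t1 t2 where t: "t1 \<in> {-1..1}" "f = (\<lambda>x. t1 * g x)" "t2 \<in> {-1..1}" "h = (\<lambda>x. t2 * g x)"
          by (auto simp: K'_def)
        have "\<bar>a * t1 + b * t2\<bar> \<le> \<bar>a\<bar> * \<bar>t1\<bar> + \<bar>b\<bar> * \<bar>t2\<bar>" by (metis abs_mult abs_triangle_ineq)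
        also have "\<dots> \<le> \<bar>a\<bar> * 1 + \<bar>b\<bar> * 1" using t by (intro add_mono mult_left_mono) auto
        finally have "a * t1 + b * t2 \<in> {-1..1}" using ab by auto
        moreover have "(\<lambda>x. a * f x + b * h x) = (\<lambda>x. (a * t1 + b * t2) * g x)"
          using t by (simp add: fun_eq_iff algebra_simps)
        ultimately show "(\<lambda>x. a * f x + b * h x) \<in> K'" unfolding K'_def by blast
      qed
      from z[OF this, of "d / 2"] have ev: "eventually (\<lambda>x. \<forall>f\<in>K'. \<bar>f x - f z\<bar> \<le> d / 2) F"
        using g(4) by (simp add: d_def)
      have gK: "g \<in> K'" unfolding K'_def by (rule image_eqI[of _ _ 1]) auto
      have "eventually (\<lambda>x. False) F" using ev FS
      proof (rule eventually_elim2)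
        fix x assume "\<forall>f\<in>K'. \<bar>f x - f z\<bar> \<le> d / 2" "x \<in> S"
        then have "\<bar>g x - g z\<bar> \<le> d / 2" "g x = 0" using gK g(2) by auto
        then show False using g(3,4) by (simp add: d_def)
      qed
      then show False using Fnb by (simp add: eventually_False)
    qed
    show "\<exists>z\<in>S. \<forall>K\<in>mackey_sets Y. \<forall>e>0. eventually (\<lambda>x. \<forall>f\<in>K. \<bar>f x - f z\<bar> \<le> e) F"
    proof (intro bexI[OF _ zS] ballI allI impI)
      fix K e assume K: "K \<in> mackey_sets Y" and e: "(e::real) > 0"
      have KY: "K \<subseteq> Y" and cK: "compact K"
        and acK: "\<forall>f\<in>K. \<forall>g\<in>K. \<forall>a b. \<bar>a\<bar> + \<bar>b\<bar> \<le> 1 \<longrightarrow> (\<lambda>x. a * f x + b * g x) \<in> K"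
        using K unfolding mackey_sets_def by auto
      obtain Mb where Mb: "Mb \<ge> 0" "\<forall>f\<in>K. dnorm S f \<le> Mb" using ubp[OF S cS _ cK] KY Ysub by blast
      define K' where "K' = {g. (\<forall>x y. g (x + y) = g x + g y) \<and> (\<forall>c x. g (c *\<^sub>R x) = c * g x) \<and>
                               (\<forall>x. \<bar>g x\<bar> \<le> Mb * norm x) \<and> restr S g \<in> K}"
      have "K' \<in> mackey_sets Z" unfolding mackey_sets_def
      proof (intro CollectI conjI ballI allI impI)
        show "K' \<subseteq> Z"
        proof
          fix g assume "g \<in> K'"
          then show "g \<in> Z" unfolding K'_def Z_def using dual_sp_UNIV_I[of g Mb] KY by blast
        qed
        have eqK': "K' = PiE UNIV (\<lambda>x. {- (Mb * norm x)..Mb * norm x}) \<inter>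
            ({g. \<forall>x. \<forall>y. g (x + y) = g x + g y} \<inter> {g. \<forall>c. \<forall>x. g (c *\<^sub>R x) = c * g x} \<inter>
             {g. \<forall>x. \<bar>g x\<bar> \<le> Mb * norm x} \<inter> restr S -` K)"
          by (auto simp: K'_def PiE_UNIV_domain abs_le_iff; meson minus_le_iff)
        have c1: "closed {g :: 'a \<Rightarrow> real. \<forall>x. \<forall>y. g (x + y) = g x + g y}"
          by (intro closed_Collect_all closed_Collect_eq continuous_intros continuous_on_product_coordinates)
        have c2: "closed {g :: 'a \<Rightarrow> real. \<forall>c. \<forall>x. g (c *\<^sub>R x) = c * g x}"
          by (intro closed_Collect_all closed_Collect_eq continuous_intros continuous_on_product_coordinates)
        have c3: "closed {g :: 'a \<Rightarrow> real. \<forall>x. \<bar>g x\<bar> \<le> Mb * norm x}"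
          by (intro closed_Collect_all closed_Collect_le continuous_intros continuous_on_product_coordinates)
        have c4: "closed (restr S -` K)"
          by (rule closed_vimage[OF compact_closed_fun[OF cK] continuous_restr])
        show "compact K'" unfolding eqK'
          by (intro compact_Int_closed compact_box_fun closed_Int c1 c2 c3 c4)
        fix f g a b assume fg: "f \<in> K'" "g \<in> K'" and ab: "\<bar>a\<bar> + \<bar>b\<bar> \<le> (1::real)"
        have fl: "\<forall>x y. f (x + y) = f x + f y" "\<forall>c x. f (c *\<^sub>R x) = c * f x" "\<forall>x. \<bar>f x\<bar> \<le> Mb * norm x" "restr S f \<in> K"
          using fg(1) by (auto simp: K'_def)
        have gl: "\<forall>x y. g (x + y) = g x + g y" "\<forall>c x. g (c *\<^sub>R x) = c * g x" "\<forall>x. \<bar>g x\<bar> \<le> Mb * norm x" "restr S g \<in> K"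
          using fg(2) by (auto simp: K'_def)
        have bd: "\<bar>a * f x + b * g x\<bar> \<le> Mb * norm x" for x
        proof -
          have "\<bar>a * f x + b * g x\<bar> \<le> \<bar>a\<bar> * \<bar>f x\<bar> + \<bar>b\<bar> * \<bar>g x\<bar>" by (metis abs_mult abs_triangle_ineq)
          also have "\<dots> \<le> \<bar>a\<bar> * (Mb * norm x) + \<bar>b\<bar> * (Mb * norm x)"
            using fl(3) gl(3) by (intro add_mono mult_left_mono) auto
          also have "\<dots> = (\<bar>a\<bar> + \<bar>b\<bar>) * (Mb * norm x)" by (simp add: algebra_simps)
          also have "\<dots> \<le> 1 * (Mb * norm x)" using ab Mb(1) by (intro mult_right_mono) auto
          finally show ?thesis by simp
        qed
        have "restr S (\<lambda>x. a * f x + b * g x) = (\<lambda>x. a * restr S f x + b * restr S g x)"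
          by (auto simp: restr_def fun_eq_iff)
        moreover have "(\<lambda>x. a * restr S f x + b * restr S g x) \<in> K" using acK fl(4) gl(4) ab by blast
        ultimately show "(\<lambda>x. a * f x + b * g x) \<in> K'" unfolding K'_def
          using fl(1,2) gl(1,2) bd by (auto simp: algebra_simps)
      qed
      have lift: "\<exists>g\<in>K'. \<forall>x\<in>S. g x = f x" if f: "f \<in> K" for f
      proof -
        have fd: "f \<in> dual_sp S" using f KY Ysub by blast
        from ext_dual[OF S fd] Mb f obtain g where g: "g \<in> dual_sp UNIV" "\<forall>x\<in>S. g x = f x"
          "dnorm UNIV g \<le> Mb" "restr S g = f" by blast
        have "\<forall>x. \<bar>g x\<bar> \<le> Mb * norm x"
        proof
          fix x
          have "\<bar>g x\<bar> \<le> dnorm UNIV g * norm x" using dnorm_bound[OF g(1) subspace_UNIV] by simp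
          also have "\<dots> \<le> Mb * norm x" using g(3) by (simp add: mult_right_mono)
          finally show "\<bar>g x\<bar> \<le> Mb * norm x" .
        qed
        then have "g \<in> K'" unfolding K'_def using dual_sp_D(1,2)[OF g(1)] g(4) f by auto
        then show ?thesis using g(2) by blast
      qed
      from z[OF \<open>K' \<in> mackey_sets Z\<close> e] FS
      show "eventually (\<lambda>x. \<forall>f\<in>K. \<bar>f x - f z\<bar> \<le> e) F"
      proof (rule eventually_elim2)
        fix x assume h: "\<forall>f\<in>K'. \<bar>f x - f z\<bar> \<le> e" and xS: "x \<in> S"
        show "\<forall>f\<in>K. \<bar>f x - f z\<bar> \<le> e"
        proof
          fix f assume "f \<in> K"
          then obtain g where "g \<in> K'" "\<forall>x\<in>S. g x = f x" using lift by blast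
          then show "\<bar>f x - f z\<bar> \<le> e" using h xS zS by force
        qed
      qed
    qed
  qed
qed

theorem corollary3p6:
  fixes S :: "'a::banach set"
  assumes "subspace S" and "closed S"
  shows "(fully_Mazur (UNIV :: 'a set) \<longrightarrow> fully_Mazur S) \<and>
         (fully_Mackey_complete (UNIV :: 'a set) \<longrightarrow> fully_Mackey_complete S)"
  using mazur_part[OF assms] mackey_part[OF assms] by blast

end
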